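(* Let $K\ge 1$ be an integer. Every element $P$ of $LD_K$ admits a unique factorisation into linear dendrons with $K$ rhizomes: if $P=F_1\times\cdots\times F_N=G_1\times\cdots\times G_M$ where all $F_i$ and $G_j$ are linear dendrons with $K$ rhizomes, then $N=M$ and the multisets $\{\{F_1,\dots,F_N\}\}$ and $\{\{G_1,\dots,G_M\}\}$ are equal (up to isomorphism).
   Context: A finite dynamical system (FDS) is a function $A:S_A\to S_A$ on a finite set, considered up to isomorphism of functional graphs (arcs $x\to A(x)$). The product $AB$ is the function on $S_A\times S_B$, $(a,b)\mapsto(A(a),B(b))$. A dendron is an FDS with connected functional graph and a fixpoint. A predecessor of a state $s$ is a state $t$ with $A(t)=s$ (the fixpoint is a predecessor of itself). A linear dendron is a dendron in which every state other than the fixpoint has at most one predecessor; it has $K$ rhizomes if its fixpoint has exactly $K$ predecessors other than itself. $LD_K$ is the multiplicative monoid generated (under the product of FDSs) by the linear dendrons with $K$ rhizomes. *)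

theory Defs
  imports Main
begin

text \<open>A finite dynamical system (FDS) is represented by a pair (S, f) with S a finite
set of states and f a function mapping S into S (values of f outside S are irrelevant).\<close>

type_synonym 'a fds = "'a set \<times> ('a \<Rightarrow> 'a)"

definition is_fds :: "'a fds \<Rightarrow> bool" where
  "is_fds A \<longleftrightarrow> finite (fst A) \<and> (\<forall>x\<in>fst A. snd A x \<in> fst A)"

definition fds_iso :: "'a fds \<Rightarrow> 'b fds \<Rightarrow> bool" where
  "fds_iso A B \<longleftrightarrow> (\<exists>h. bij_betw h (fst A) (fst B) \<and>
      (\<forall>x\<in>fst A. h (snd A x) = snd B (h x)))"

definition fds_arcs :: "'a fds \<Rightarrow> ('a \<times> 'a) set" where
  "fds_arcs A = {(x, snd A x) | x. x \<in> fst A}"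

definition fds_connected :: "'a fds \<Rightarrow> bool" where
  "fds_connected A \<longleftrightarrow> fst A \<noteq> {} \<and>
     (\<forall>x\<in>fst A. \<forall>y\<in>fst A. (x, y) \<in> (fds_arcs A \<union> (fds_arcs A)\<inverse>)\<^sup>*)"

definition predecessors :: "'a fds \<Rightarrow> 'a \<Rightarrow> 'a set" where
  "predecessors A s = {t \<in> fst A. snd A t = s}"

definition dendron :: "'a fds \<Rightarrow> bool" where
  "dendron A \<longleftrightarrow> is_fds A \<and> fds_connected A \<and> (\<exists>r\<in>fst A. snd A r = r)"

definition linear_dendron :: "nat \<Rightarrow> 'a fds \<Rightarrow> bool" where
  "linear_dendron K A \<longleftrightarrow> dendron A \<and>
     (\<exists>r\<in>fst A. snd A r = r \<and>
        (\<forall>s\<in>fst A. s \<noteq> r \<longrightarrow> card (predecessors A s) \<le> 1) \<and>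
        card (predecessors A r - {r}) = K)"

definition fds_prod :: "'a fds list \<Rightarrow> 'a list fds" where
  "fds_prod Fs = ({xs. length xs = length Fs \<and> (\<forall>i<length Fs. xs ! i \<in> fst (Fs ! i))},
                  \<lambda>xs. map (\<lambda>(F, x). snd F x) (zip Fs xs))"

end

theory Submission
  imports Defs "HOL-Computational_Algebra.Polynomial" "HOL-Combinatorics.List_Permutation"
begin


definition pc :: "'a fds \<Rightarrow> 'a \<Rightarrow> nat" where
  "pc A u = card (predecessors A u)"

definition wt :: "nat \<Rightarrow> nat \<Rightarrow> nat \<Rightarrow> 'a fds \<Rightarrow> 'a \<Rightarrow> nat" where
  "wt s c J A x = pc A (snd A x) ^ s * (\<Prod>j\<in>{1..J}. pc A ((snd A ^^ j) x) ^ c)"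

definition Phi :: "nat \<Rightarrow> nat \<Rightarrow> nat \<Rightarrow> 'a fds \<Rightarrow> nat" where
  "Phi s c J A = (\<Sum>x\<in>fst A. wt s c J A x)"

lemma iter_closed: "is_fds A \<Longrightarrow> y \<in> fst A \<Longrightarrow> (snd A ^^ n) y \<in> fst A"
  by (induction n) (auto simp: is_fds_def)

lemma Phi_iso:
  assumes A: "is_fds A" and iso: "fds_iso A B"
  shows "Phi s c J A = Phi s c J B"
proof -
  obtain h where bij: "bij_betw h (fst A) (fst B)"
    and hc: "\<forall>x\<in>fst A. h (snd A x) = snd B (h x)"
    using iso unfolding fds_iso_def by blast
  have it: "(snd B ^^ j) (h x) = h ((snd A ^^ j) x)" if "x \<in> fst A" for x j
  proof (induction j)
    case 0 then show ?case by simp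
  next
    case (Suc j)
    have "(snd A ^^ j) x \<in> fst A" using iter_closed[OF A that] .
    then show ?case using Suc hc by simp
  qed
  have pcB: "pc B (h u) = pc A u" if u: "u \<in> fst A" for u
  proof -
    have "predecessors B (h u) = h ` predecessors A u"
    proof
      show "h ` predecessors A u \<subseteq> predecessors B (h u)"
        using bij hc by (auto simp: predecessors_def bij_betw_def)
    next
      show "predecessors B (h u) \<subseteq> h ` predecessors A u"
      proof
        fix z assume z: "z \<in> predecessors B (h u)"
        then have zB: "z \<in> fst B" and gz: "snd B z = h u" by (auto simp: predecessors_def)
        then obtain x where x: "x \<in> fst A" "z = h x" using bij by (auto simp: bij_betw_def)
        have fx: "snd A x \<in> fst A" using A x by (auto simp: is_fds_def)
        have "h (snd A x) = h u" using hc x gz by simp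
        then have "snd A x = u" using bij fx u by (auto simp: bij_betw_def inj_on_def)
        then show "z \<in> h ` predecessors A u" using x by (auto simp: predecessors_def)
      qed
    qed
    moreover have "inj_on h (predecessors A u)"
      using bij by (auto simp: bij_betw_def predecessors_def intro: inj_on_subset)
    ultimately show ?thesis by (simp add: pc_def card_image)
  qed
  have wtB: "wt s c J B (h x) = wt s c J A x" if x: "x \<in> fst A" for x
  proof -
    have "snd B (h x) = h (snd A x)" using hc x by simp
    moreover have "snd A x \<in> fst A" using A x by (auto simp: is_fds_def)
    moreover have "\<forall>j. pc B ((snd B ^^ j) (h x)) = pc A ((snd A ^^ j) x)"
      using it[OF x] pcB iter_closed[OF A x] by simp
    ultimately show ?thesis unfolding wt_def using pcB by simp
  qed
  have "Phi s c J B = (\<Sum>x\<in>h ` fst A. wt s c J B x)"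
    using bij by (simp add: Phi_def bij_betw_def)
  also have "\<dots> = (\<Sum>x\<in>fst A. wt s c J B (h x))"
    using sum.reindex[of h "fst A" "wt s c J B"] bij unfolding bij_betw_def by (simp add: o_def)
  also have "\<dots> = Phi s c J A" unfolding Phi_def using wtB by simp
  finally show ?thesis by simp
qed

lemma prod_Cons_states:
  "fst (fds_prod (F # Fs)) = (\<lambda>(x, xs). x # xs) ` (fst F \<times> fst (fds_prod Fs))"
proof -
  have "xs \<in> fst (fds_prod (F # Fs)) \<longleftrightarrow> xs \<in> (\<lambda>(x, xs). x # xs) ` (fst F \<times> fst (fds_prod Fs))" for xs
  proof (cases xs)
    case Nil then show ?thesis by (auto simp: fds_prod_def)
  next
    case (Cons y ys)
    have "(\<forall>i<Suc (length Fs). (y#ys) ! i \<in> fst ((F#Fs) ! i)) \<longleftrightarrow>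
          y \<in> fst F \<and> (\<forall>i<length Fs. ys ! i \<in> fst (Fs ! i))"
      by (auto simp: All_less_Suc2)
    then show ?thesis using Cons by (auto simp: fds_prod_def)
  qed
  then show ?thesis by blast
qed

lemma prod_Cons_map: "snd (fds_prod (F # Fs)) (x # xs) = snd F x # snd (fds_prod Fs) xs"
  by (simp add: fds_prod_def)

lemma prod_Cons_iter:
  "(snd (fds_prod (F # Fs)) ^^ j) (x # xs) = (snd F ^^ j) x # (snd (fds_prod Fs) ^^ j) xs"
  by (induction j) (simp_all add: prod_Cons_map)

lemma prod_Cons_pred:
  "predecessors (fds_prod (F # Fs)) (y # ys) =
   (\<lambda>(x, xs). x # xs) ` (predecessors F y \<times> predecessors (fds_prod Fs) ys)"
  unfolding predecessors_def prod_Cons_states by (auto simp: prod_Cons_map)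

lemma inj_Cons2: "inj_on (\<lambda>(x, xs). x # xs) S"
  by (auto simp: inj_on_def)

lemma pc_Cons: "pc (fds_prod (F # Fs)) (y # ys) = pc F y * pc (fds_prod Fs) ys"
  unfolding pc_def prod_Cons_pred
  by (simp add: card_image[OF inj_Cons2] card_cartesian_product)

lemma wt_Cons:
  "wt s c J (fds_prod (F # Fs)) (x # xs) = wt s c J F x * wt s c J (fds_prod Fs) xs"
  unfolding wt_def
  by (simp add: prod_Cons_map prod_Cons_iter pc_Cons power_mult_distrib prod.distrib)

lemma Phi_prod: "Phi s c J (fds_prod Fs) = (\<Prod>F\<leftarrow>Fs. Phi s c J F)"
proof (induction Fs)
  case Nil
  have "fst (fds_prod ([] :: 'a fds list)) = {[]}" by (auto simp: fds_prod_def)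
  moreover have "predecessors (fds_prod ([] :: 'a fds list)) [] = {[]}"
    by (auto simp: predecessors_def fds_prod_def)
  moreover have "\<And>j. (snd (fds_prod ([] :: 'a fds list)) ^^ j) [] = []"
    by (induct_tac j) (auto simp: fds_prod_def)
  ultimately show ?case by (simp add: Phi_def wt_def pc_def fds_prod_def)
next
  case (Cons F Fs)
  have "Phi s c J (fds_prod (F # Fs)) =
        (\<Sum>p\<in>fst F \<times> fst (fds_prod Fs). wt s c J (fds_prod (F # Fs)) ((\<lambda>(x, xs). x # xs) p))"
    unfolding Phi_def prod_Cons_states by (simp add: sum.reindex[OF inj_Cons2])
  also have "\<dots> = (\<Sum>p\<in>fst F \<times> fst (fds_prod Fs). wt s c J F (fst p) * wt s c J (fds_prod Fs) (snd p))"
    by (rule sum.cong) (auto simp: wt_Cons)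
  also have "\<dots> = Phi s c J F * Phi s c J (fds_prod Fs)"
    unfolding Phi_def by (simp add: sum_product sum.cartesian_product case_prod_beta)
  finally show ?case using Cons by simp
qed

lemma is_fds_prod: "\<forall>F\<in>set Fs. is_fds F \<Longrightarrow> is_fds (fds_prod Fs)"
proof (induction Fs)
  case Nil then show ?case by (auto simp: is_fds_def fds_prod_def)
next
  case (Cons F Fs)
  then have "is_fds F" "is_fds (fds_prod Fs)" by auto
  then show ?case unfolding is_fds_def prod_Cons_states
    by (auto simp: prod_Cons_map)
qed




definition rlin :: "'a fds \<Rightarrow> 'a \<Rightarrow> bool" where
  "rlin A r \<longleftrightarrow> is_fds A \<and> r \<in> fst A \<and> snd A r = r \<and>
     (\<forall>y\<in>fst A. \<exists>j. (snd A ^^ j) y = r) \<and>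
     (\<forall>s\<in>fst A. s \<noteq> r \<longrightarrow> card (predecessors A s) \<le> 1)"

definition Nd :: "'a fds \<Rightarrow> 'a \<Rightarrow> nat \<Rightarrow> nat" where
  "Nd A r t = card {y \<in> fst A. (snd A ^^ t) y = r}"

lemma fix_iter: "f r = r \<Longrightarrow> (f ^^ n) r = r"
  by (induction n) auto

lemma iter_iter: "(f ^^ m) ((f ^^ n) x) = (f ^^ (m + n)) x"
  by (simp add: funpow_add)

lemma card_le1_eq: "finite P \<Longrightarrow> card P \<le> 1 \<Longrightarrow> a \<in> P \<Longrightarrow> b \<in> P \<Longrightarrow> a = b"
  using card_le_Suc0_iff_eq by fastforce

lemma reach_mono:
  assumes "f r = r" "(f ^^ j) y = r" "j \<le> k"
  shows "(f ^^ k) y = r"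
proof -
  have "(f ^^ ((k - j) + j)) y = (f ^^ (k - j)) ((f ^^ j) y)"
    by (simp add: funpow_add)
  moreover have "(k - j) + j = k" using assms(3) by simp
  ultimately have "(f ^^ k) y = (f ^^ (k - j)) ((f ^^ j) y)" by simp
  then show ?thesis using assms(2) fix_iter[of f r, OF assms(1)] by simp
qed

lemma rlin_T:
  assumes "rlin A r"
  shows "\<exists>T. \<forall>t\<ge>T. \<forall>y\<in>fst A. (snd A ^^ t) y = r"
proof -
  from assms have fin: "finite (fst A)" and fr: "snd A r = r"
    and ex: "\<forall>y\<in>fst A. \<exists>j. (snd A ^^ j) y = r"
    by (auto simp: rlin_def is_fds_def)
  from bchoice[OF ex] obtain J where J: "\<forall>y\<in>fst A. (snd A ^^ J y) y = r" by blast
  have "\<forall>t\<ge>sum J (fst A). \<forall>y\<in>fst A. (snd A ^^ t) y = r"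
  proof (intro allI impI ballI)
    fix t y assume t: "sum J (fst A) \<le> t" and y: "y \<in> fst A"
    have "J y \<le> sum J (fst A)" using member_le_sum[of y "fst A" J] fin y by simp
    then show "(snd A ^^ t) y = r" using reach_mono[OF fr J[rule_format, OF y]] t by simp
  qed
  then show ?thesis by blast
qed

lemma Nd_full:
  assumes "is_fds A"
  shows "Nd A r t = card (fst A) \<longleftrightarrow> (\<forall>y\<in>fst A. (snd A ^^ t) y = r)"
proof -
  have fin: "finite (fst A)" using assms by (simp add: is_fds_def)
  have "Nd A r t = card (fst A) \<longleftrightarrow> {y \<in> fst A. (snd A ^^ t) y = r} = fst A"
  proof
    assume "Nd A r t = card (fst A)"
    then show "{y \<in> fst A. (snd A ^^ t) y = r} = fst A"
      unfolding Nd_def using card_subset_eq[OF fin, of "{y \<in> fst A. (snd A ^^ t) y = r}"] by auto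
  next
    assume "{y \<in> fst A. (snd A ^^ t) y = r} = fst A"
    then show "Nd A r t = card (fst A)" unfolding Nd_def by simp
  qed
  then show ?thesis by blast
qed

lemma rlin_fix_unique:
  assumes "rlin A r" "z \<in> fst A" "snd A z = z"
  shows "z = r"
proof -
  obtain j where "(snd A ^^ j) z = r" using assms by (auto simp: rlin_def)
  then show ?thesis using fix_iter[of "snd A" z j] assms(3) by simp
qed

lemma rlin_iso_aux:
  "card (fst A) = n \<Longrightarrow> rlin A r \<Longrightarrow> rlin B r' \<Longrightarrow> (\<forall>t. Nd A r t = Nd B r' t) \<Longrightarrow> fds_iso A B"
proof (induction n arbitrary: A B rule: less_induct)
  case (less n A B)
  note rA = less.prems(2) and rB = less.prems(3) and NdE = less.prems(4)
  let ?f = "snd A" and ?g = "snd B" and ?S = "fst A" and ?S' = "fst B"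
  have isA: "is_fds A" and isB: "is_fds B" using rA rB by (auto simp: rlin_def)
  have finA: "finite ?S" and finB: "finite ?S'" using isA isB by (auto simp: is_fds_def)
  have rS: "r \<in> ?S" and fr: "?f r = r" and r'S: "r' \<in> ?S'" and gr: "?g r' = r'"
    using rA rB by (auto simp: rlin_def)
  obtain TA where TA: "\<forall>t\<ge>TA. \<forall>y\<in>?S. (?f ^^ t) y = r" using rlin_T[OF rA] by blast
  obtain TB where TB: "\<forall>t\<ge>TB. \<forall>y\<in>?S'. (?g ^^ t) y = r'" using rlin_T[OF rB] by blast
  have cardeq: "card ?S = card ?S'"
  proof -
    have "Nd A r (TA + TB) = card ?S" using Nd_full[OF isA] TA by simp
    moreover have "Nd B r' (TA + TB) = card ?S'" using Nd_full[OF isB] TB by simp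
    moreover have "Nd A r (TA + TB) = Nd B r' (TA + TB)" using NdE by blast
    ultimately show ?thesis by simp
  qed
  have fullE: "(\<forall>y\<in>?S. (?f ^^ t) y = r) \<longleftrightarrow> (\<forall>y\<in>?S'. (?g ^^ t) y = r')" for t
  proof -
    have "Nd A r t = Nd B r' t" using NdE by blast
    then show ?thesis using Nd_full[OF isA, of r t] Nd_full[OF isB, of r' t] cardeq by simp
  qed
  show ?case
  proof (cases "?S = {r}")
    case True
    then have "card ?S' = 1" using cardeq by simp
    then obtain x where "?S' = {x}" by (rule card_1_singletonE)
    then have S': "?S' = {r'}" using r'S by simp
    have "bij_betw (\<lambda>_. r') ?S ?S'" using True S' by (simp add: bij_betw_def)
    moreover have "\<forall>x\<in>?S. (\<lambda>_. r') (?f x) = ?g ((\<lambda>_. r') x)" using gr by simp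
    ultimately show ?thesis unfolding fds_iso_def by blast
  next
    case False
    then obtain y0 where y0: "y0 \<in> ?S" "y0 \<noteq> r" using rS by blast
    define T where "T = (LEAST t. \<forall>y\<in>?S. (?f ^^ t) y = r)"
    have Tfull: "\<forall>y\<in>?S. (?f ^^ T) y = r"
      unfolding T_def by (rule LeastI_ex) (use TA in blast)
    have T0: "T \<noteq> 0" using Tfull y0 by (intro notI) simp
    have "\<not> (\<forall>y\<in>?S. (?f ^^ (T - 1)) y = r)"
    proof
      assume H: "\<forall>y\<in>?S. (?f ^^ (T - 1)) y = r"
      have "(LEAST t. \<forall>y\<in>?S. (?f ^^ t) y = r) \<le> T - 1" by (rule Least_le) (rule H)
      then show False using T0 unfolding T_def[symmetric] by simp
    qed
    then obtain y where yS: "y \<in> ?S" and yT: "(?f ^^ (T - 1)) y \<noteq> r" by blast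
    have TfullB: "\<forall>y\<in>?S'. (?g ^^ T) y = r'" using Tfull fullE[of T] by simp
    have "\<not> (\<forall>y\<in>?S'. (?g ^^ (T - 1)) y = r')"
      using fullE[of "T - 1"] \<open>\<not> (\<forall>y\<in>?S. (?f ^^ (T - 1)) y = r)\<close> by simp
    then obtain y' where y'S: "y' \<in> ?S'" and y'T: "(?g ^^ (T - 1)) y' \<noteq> r'" by blast
    have yTr: "(?f ^^ T) y = r" using Tfull yS by blast
    have y'Tr: "(?g ^^ T) y' = r'" using TfullB y'S by blast
    have ylt: "(?f ^^ j) y = r \<longleftrightarrow> T \<le> j" for j
    proof
      assume "(?f ^^ j) y = r"
      show "T \<le> j"
      proof (rule ccontr)
        assume "\<not> T \<le> j"
        then have "j \<le> T - 1" by simp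
        from reach_mono[OF fr \<open>(?f ^^ j) y = r\<close> this] yT show False by simp
      qed
    next
      assume "T \<le> j" then show "(?f ^^ j) y = r" using reach_mono[OF fr yTr] by simp
    qed
    have ylt': "(?g ^^ j) y' = r' \<longleftrightarrow> T \<le> j" for j
    proof
      assume "(?g ^^ j) y' = r'"
      show "T \<le> j"
      proof (rule ccontr)
        assume "\<not> T \<le> j"
        then have "j \<le> T - 1" by simp
        from reach_mono[OF gr \<open>(?g ^^ j) y' = r'\<close> this] y'T show False by simp
      qed
    next
      assume "T \<le> j" then show "(?g ^^ j) y' = r'" using reach_mono[OF gr y'Tr] by simp
    qed
    obtain T' where T': "T = Suc T'" using T0 by (cases T) auto
    define C where "C = (\<lambda>j. (?f ^^ j) y) ` {..<T}"
    define C' where "C' = (\<lambda>j. (?g ^^ j) y') ` {..<T}"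
    have injC: "inj_on (\<lambda>j. (?f ^^ j) y) {..<T}"
    proof (rule inj_onI)
      fix i j assume i: "i \<in> {..<T}" and j: "j \<in> {..<T}" and e: "(?f ^^ i) y = (?f ^^ j) y"
      have key: "False" if "a < b" "b < T" "(?f ^^ a) y = (?f ^^ b) y" for a b
      proof -
        have "(?f ^^ (T - b + a)) y = (?f ^^ (T - b)) ((?f ^^ a) y)" by (simp add: funpow_add)
        also have "\<dots> = (?f ^^ (T - b)) ((?f ^^ b) y)" using that by simp
        also have "\<dots> = (?f ^^ T) y" using that by (simp add: iter_iter)
        finally show False using ylt[of "T - b + a"] yTr that by simp
      qed
      show "i = j" using key[of i j] key[of j i] i j e by (cases i j rule: linorder_cases) auto
    qed
    have injC': "inj_on (\<lambda>j. (?g ^^ j) y') {..<T}"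
    proof (rule inj_onI)
      fix i j assume i: "i \<in> {..<T}" and j: "j \<in> {..<T}" and e: "(?g ^^ i) y' = (?g ^^ j) y'"
      have key: "False" if "a < b" "b < T" "(?g ^^ a) y' = (?g ^^ b) y'" for a b
      proof -
        have "(?g ^^ (T - b + a)) y' = (?g ^^ (T - b)) ((?g ^^ a) y')" by (simp add: funpow_add)
        also have "\<dots> = (?g ^^ (T - b)) ((?g ^^ b) y')" using that by simp
        also have "\<dots> = (?g ^^ T) y'" using that by (simp add: iter_iter)
        finally show False using ylt'[of "T - b + a"] y'Tr that by simp
      qed
      show "i = j" using key[of i j] key[of j i] i j e by (cases i j rule: linorder_cases) auto
    qed
    have CS: "C \<subseteq> ?S" unfolding C_def using iter_closed[OF isA yS] by auto
    have C'S: "C' \<subseteq> ?S'" unfolding C'_def using iter_closed[OF isB y'S] by auto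
    have rC: "r \<notin> C"
    proof
      assume "r \<in> C"
      then obtain j where "j < T" "(?f ^^ j) y = r" unfolding C_def by auto
      then show False using ylt[of j] by simp
    qed
    have r'C: "r' \<notin> C'"
    proof
      assume "r' \<in> C'"
      then obtain j where "j < T" "(?g ^^ j) y' = r'" unfolding C'_def by auto
      then show False using ylt'[of j] by simp
    qed
    have closA: "?f z \<in> ?S - C" if z: "z \<in> ?S - C" for z
    proof -
      have fzS: "?f z \<in> ?S" using isA z by (auto simp: is_fds_def)
      have "?f z \<notin> C"
      proof
        assume "?f z \<in> C"
        then obtain j where j: "j < T" "?f z = (?f ^^ j) y" unfolding C_def by auto
        show False
        proof (cases j)
          case 0
          then have "?f z = y" using j by simp
          then have "(?f ^^ T) z = (?f ^^ (T - 1)) y"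
            unfolding T' funpow_Suc_right by simp
          then show False using Tfull z yT by auto
        next
          case (Suc k)
          have k: "k < T" using j Suc by simp
          have ne: "(?f ^^ j) y \<noteq> r" using ylt j by simp
          have jS: "(?f ^^ j) y \<in> ?S" using iter_closed[OF isA yS] .
          have p1: "z \<in> predecessors A ((?f ^^ j) y)" using z j by (auto simp: predecessors_def)
          have p2: "(?f ^^ k) y \<in> predecessors A ((?f ^^ j) y)"
            using Suc iter_closed[OF isA yS] by (auto simp: predecessors_def)
          have p3: "z \<noteq> (?f ^^ k) y" using z k unfolding C_def by auto
          have p4: "finite (predecessors A ((?f ^^ j) y))"
            using finA by (auto simp: predecessors_def)
          have "\<forall>s\<in>fst A. s \<noteq> r \<longrightarrow> card (predecessors A s) \<le> 1"
            using rA unfolding rlin_def by blast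
          then have p5: "card (predecessors A ((?f ^^ j) y)) \<le> 1"
            using ne jS by blast
          show False using card_le1_eq[OF p4 p5 p1 p2] p3 by simp
        qed
      qed
      then show ?thesis using fzS by blast
    qed
    have closB: "?g z \<in> ?S' - C'" if z: "z \<in> ?S' - C'" for z
    proof -
      have fzS: "?g z \<in> ?S'" using isB z by (auto simp: is_fds_def)
      have "?g z \<notin> C'"
      proof
        assume "?g z \<in> C'"
        then obtain j where j: "j < T" "?g z = (?g ^^ j) y'" unfolding C'_def by auto
        show False
        proof (cases j)
          case 0
          then have "?g z = y'" using j by simp
          then have "(?g ^^ T) z = (?g ^^ (T - 1)) y'"
            unfolding T' funpow_Suc_right by simp
          then show False using TfullB z y'T by auto
        next
          case (Suc k)
          have k: "k < T" using j Suc by simp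
          have ne: "(?g ^^ j) y' \<noteq> r'" using ylt' j by simp
          have jS: "(?g ^^ j) y' \<in> ?S'" using iter_closed[OF isB y'S] .
          have p1: "z \<in> predecessors B ((?g ^^ j) y')" using z j by (auto simp: predecessors_def)
          have p2: "(?g ^^ k) y' \<in> predecessors B ((?g ^^ j) y')"
            using Suc iter_closed[OF isB y'S] by (auto simp: predecessors_def)
          have p3: "z \<noteq> (?g ^^ k) y'" using z k unfolding C'_def by auto
          have p4: "finite (predecessors B ((?g ^^ j) y'))"
            using finB by (auto simp: predecessors_def)
          have "\<forall>s\<in>fst B. s \<noteq> r' \<longrightarrow> card (predecessors B s) \<le> 1"
            using rB unfolding rlin_def by blast
          then have p5: "card (predecessors B ((?g ^^ j) y')) \<le> 1"
            using ne jS by blast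
          show False using card_le1_eq[OF p4 p5 p1 p2] p3 by simp
        qed
      qed
      then show ?thesis using fzS by blast
    qed
    define A' where "A' = (?S - C, ?f)"
    define B' where "B' = (?S' - C', ?g)"
    have rA': "rlin A' r"
      unfolding rlin_def A'_def is_fds_def
    proof (intro conjI ballI impI)
      show "finite (fst (?S - C, ?f))" using finA by simp
      show "snd (?S - C, ?f) x \<in> fst (?S - C, ?f)" if "x \<in> fst (?S - C, ?f)" for x
        using closA that by simp
      show "r \<in> fst (?S - C, ?f)" using rS rC by simp
      show "snd (?S - C, ?f) r = r" using fr by simp
      show "\<exists>j. (snd (?S - C, ?f) ^^ j) x = r" if "x \<in> fst (?S - C, ?f)" for x
        using that rA by (auto simp: rlin_def)
      show "card (predecessors (?S - C, ?f) s) \<le> 1" if "s \<in> fst (?S - C, ?f)" "s \<noteq> r" for s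
      proof -
        have "predecessors (?S - C, ?f) s \<subseteq> predecessors A s" by (auto simp: predecessors_def)
        moreover have "finite (predecessors A s)" using finA by (auto simp: predecessors_def)
        moreover have "card (predecessors A s) \<le> 1" using rA that by (auto simp: rlin_def)
        ultimately show ?thesis by (meson card_mono le_trans)
      qed
    qed
    have rB': "rlin B' r'"
      unfolding rlin_def B'_def is_fds_def
    proof (intro conjI ballI impI)
      show "finite (fst (?S' - C', ?g))" using finB by simp
      show "snd (?S' - C', ?g) x \<in> fst (?S' - C', ?g)" if "x \<in> fst (?S' - C', ?g)" for x
        using closB that by simp
      show "r' \<in> fst (?S' - C', ?g)" using r'S r'C by simp
      show "snd (?S' - C', ?g) r' = r'" using gr by simp
      show "\<exists>j. (snd (?S' - C', ?g) ^^ j) x = r'" if "x \<in> fst (?S' - C', ?g)" for x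
        using that rB by (auto simp: rlin_def)
      show "card (predecessors (?S' - C', ?g) s) \<le> 1" if "s \<in> fst (?S' - C', ?g)" "s \<noteq> r'" for s
      proof -
        have "predecessors (?S' - C', ?g) s \<subseteq> predecessors B s" by (auto simp: predecessors_def)
        moreover have "finite (predecessors B s)" using finB by (auto simp: predecessors_def)
        moreover have "card (predecessors B s) \<le> 1" using rB that by (auto simp: rlin_def)
        ultimately show ?thesis by (meson card_mono le_trans)
      qed
    qed
    have NdA': "Nd A' r t = Nd A r t - card {j\<in>{..<T}. T \<le> t + j}" for t
    proof -
      have "{z \<in> ?S - C. (?f ^^ t) z = r} = {z \<in> ?S. (?f ^^ t) z = r} - {z \<in> C. (?f ^^ t) z = r}"
        by auto
      moreover have "{z \<in> C. (?f ^^ t) z = r} = (\<lambda>j. (?f ^^ j) y) ` {j\<in>{..<T}. T \<le> t + j}"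
      proof
        show "{z \<in> C. (?f ^^ t) z = r} \<subseteq> (\<lambda>j. (?f ^^ j) y) ` {j\<in>{..<T}. T \<le> t + j}"
        proof
          fix z assume "z \<in> {z \<in> C. (?f ^^ t) z = r}"
          then obtain j where j: "j < T" "z = (?f ^^ j) y" "(?f ^^ t) z = r" unfolding C_def by auto
          then have "(?f ^^ (t + j)) y = r" by (simp add: iter_iter)
          then have "T \<le> t + j" using ylt by blast
          then show "z \<in> (\<lambda>j. (?f ^^ j) y) ` {j\<in>{..<T}. T \<le> t + j}" using j by blast
        qed
      next
        show "(\<lambda>j. (?f ^^ j) y) ` {j\<in>{..<T}. T \<le> t + j} \<subseteq> {z \<in> C. (?f ^^ t) z = r}"
          unfolding C_def by (auto simp: iter_iter ylt)
      qed
      moreover have "card ((\<lambda>j. (?f ^^ j) y) ` {j\<in>{..<T}. T \<le> t + j}) = card {j\<in>{..<T}. T \<le> t + j}"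
        by (rule card_image) (rule inj_on_subset[OF injC], auto)
      moreover have "{z \<in> C. (?f ^^ t) z = r} \<subseteq> {z \<in> ?S. (?f ^^ t) z = r}" using CS by auto
      moreover have "finite {z \<in> C. (?f ^^ t) z = r}" unfolding C_def by auto
      ultimately show ?thesis unfolding Nd_def A'_def by (simp add: card_Diff_subset)
    qed
    have NdB': "Nd B' r' t = Nd B r' t - card {j\<in>{..<T}. T \<le> t + j}" for t
    proof -
      have "{z \<in> ?S' - C'. (?g ^^ t) z = r'} = {z \<in> ?S'. (?g ^^ t) z = r'} - {z \<in> C'. (?g ^^ t) z = r'}"
        by auto
      moreover have "{z \<in> C'. (?g ^^ t) z = r'} = (\<lambda>j. (?g ^^ j) y') ` {j\<in>{..<T}. T \<le> t + j}"
      proof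
        show "{z \<in> C'. (?g ^^ t) z = r'} \<subseteq> (\<lambda>j. (?g ^^ j) y') ` {j\<in>{..<T}. T \<le> t + j}"
        proof
          fix z assume "z \<in> {z \<in> C'. (?g ^^ t) z = r'}"
          then obtain j where j: "j < T" "z = (?g ^^ j) y'" "(?g ^^ t) z = r'" unfolding C'_def by auto
          then have "(?g ^^ (t + j)) y' = r'" by (simp add: iter_iter)
          then have "T \<le> t + j" using ylt' by blast
          then show "z \<in> (\<lambda>j. (?g ^^ j) y') ` {j\<in>{..<T}. T \<le> t + j}" using j by blast
        qed
      next
        show "(\<lambda>j. (?g ^^ j) y') ` {j\<in>{..<T}. T \<le> t + j} \<subseteq> {z \<in> C'. (?g ^^ t) z = r'}"
          unfolding C'_def by (auto simp: iter_iter ylt')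
      qed
      moreover have "card ((\<lambda>j. (?g ^^ j) y') ` {j\<in>{..<T}. T \<le> t + j}) = card {j\<in>{..<T}. T \<le> t + j}"
        by (rule card_image) (rule inj_on_subset[OF injC'], auto)
      moreover have "{z \<in> C'. (?g ^^ t) z = r'} \<subseteq> {z \<in> ?S'. (?g ^^ t) z = r'}" using C'S by auto
      moreover have "finite {z \<in> C'. (?g ^^ t) z = r'}" unfolding C'_def by auto
      ultimately show ?thesis unfolding Nd_def B'_def by (simp add: card_Diff_subset)
    qed
    have NdE': "\<forall>t. Nd A' r t = Nd B' r' t" using NdA' NdB' NdE by simp
    have yC: "y \<in> C" unfolding C_def using T0 by (auto intro!: image_eqI[of _ _ 0])
    have "?S - C \<subset> ?S" using yC CS by blast
    then have "card (?S - C) < card ?S" using finA by (rule psubset_card_mono[rotated])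
    then have lt: "card (fst A') < n" unfolding A'_def using less.prems(1) by simp
    from less.IH[OF lt refl rA' rB' NdE'] obtain h' where
      h'bij: "bij_betw h' (?S - C) (?S' - C')" and h'c: "\<forall>x\<in>?S - C. h' (?f x) = ?g (h' x)"
      unfolding fds_iso_def A'_def B'_def by auto
    have h'r: "h' r = r'"
    proof -
      have hrS: "h' r \<in> ?S' - C'" using h'bij rS rC by (auto simp: bij_betw_def)
      have "h' (?f r) = ?g (h' r)" using h'c rS rC by blast
      then have "?g (h' r) = h' r" using fr by simp
      then show ?thesis using rlin_fix_unique[OF rB'] hrS unfolding B'_def by simp
    qed
    define idx where "idx = the_inv_into {..<T} (\<lambda>j. (?f ^^ j) y)"
    define h where "h z = (if z \<in> C then (?g ^^ idx z) y' else h' z)" for z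
    have idx: "idx ((?f ^^ j) y) = j" if "j < T" for j
      unfolding idx_def using the_inv_into_f_f[OF injC] that by simp
    have bC: "bij_betw h C C'"
    proof -
      have "bij_betw idx C {..<T}" unfolding idx_def C_def
        by (rule bij_betw_the_inv_into) (simp add: bij_betw_def injC)
      moreover have "bij_betw (\<lambda>j. (?g ^^ j) y') {..<T} C'"
        unfolding C'_def by (simp add: bij_betw_def injC')
      ultimately have "bij_betw ((\<lambda>j. (?g ^^ j) y') \<circ> idx) C C'" by (rule bij_betw_trans)
      then show ?thesis by (rule bij_betw_cong[THEN iffD1, rotated]) (simp add: h_def)
    qed
    have bR: "bij_betw h (?S - C) (?S' - C')"
      using h'bij by (rule bij_betw_cong[THEN iffD1, rotated]) (simp add: h_def)
    have "bij_betw h ((?S - C) \<union> C) ((?S' - C') \<union> C')"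
      by (rule bij_betw_combine[OF bR bC]) auto
    moreover have "(?S - C) \<union> C = ?S" "(?S' - C') \<union> C' = ?S'" using CS C'S by auto
    ultimately have hbij: "bij_betw h ?S ?S'" by simp
    have hcomm: "h (?f z) = ?g (h z)" if z: "z \<in> ?S" for z
    proof (cases "z \<in> C")
      case True
      then obtain j where j: "j < T" "z = (?f ^^ j) y" unfolding C_def by auto
      have hz: "h z = (?g ^^ j) y'" using True j idx by (simp add: h_def)
      show ?thesis
      proof (cases "Suc j < T")
        case True
        have "?f z = (?f ^^ Suc j) y" using j by simp
        moreover have "(?f ^^ Suc j) y \<in> C" using True unfolding C_def by blast
        ultimately have "h (?f z) = (?g ^^ Suc j) y'" using idx[OF True] by (simp add: h_def)
        then show ?thesis using hz by simp
      next
        case False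
        then have jT: "Suc j = T" using j by simp
        have "?f z = r" using yTr unfolding j(2) jT[symmetric] by simp
        then have "h (?f z) = r'" using rC h'r by (simp add: h_def)
        moreover have "?g (h z) = r'" using y'Tr unfolding hz jT[symmetric] by simp
        ultimately show ?thesis by simp
      qed
    next
      case False
      then have "?f z \<in> ?S - C" using closA z by blast
      then have "h (?f z) = h' (?f z)" by (simp add: h_def)
      also have "\<dots> = ?g (h' z)" using h'c z False by blast
      also have "\<dots> = ?g (h z)" using False by (simp add: h_def)
      finally show ?thesis .
    qed
    show ?thesis unfolding fds_iso_def using hbij hcomm by blast
  qed
qed

lemma rlin_iso:
  "rlin A r \<Longrightarrow> rlin B r' \<Longrightarrow> (\<forall>t. Nd A r t = Nd B r' t) \<Longrightarrow> fds_iso A B"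
  by (rule rlin_iso_aux[OF refl])




lemma ld_rlin:
  assumes "linear_dendron K F"
  shows "\<exists>r. rlin F r \<and> card (predecessors F r - {r}) = K"
proof -
  from assms obtain r where isF: "is_fds F" and conn: "fds_connected F"
    and rS: "r \<in> fst F" and fr: "snd F r = r"
    and lin: "\<forall>s\<in>fst F. s \<noteq> r \<longrightarrow> card (predecessors F s) \<le> 1"
    and cK: "card (predecessors F r - {r}) = K"
    unfolding linear_dendron_def dendron_def by blast
  let ?E = "fds_arcs F"
  have reach: "\<exists>j. (snd F ^^ j) v = r" if "(r, v) \<in> (?E \<union> ?E\<inverse>)\<^sup>*" for v
    using that
  proof (induction rule: rtrancl_induct)
    case base
    show ?case by (rule exI[of _ 0]) simp
  next
    case (step u v)
    from step.IH obtain j where j: "(snd F ^^ j) u = r" by blast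
    from step.hyps(2) show ?case
    proof
      assume "(u, v) \<in> ?E"
      then have "v = snd F u" by (auto simp: fds_arcs_def)
      then have "(snd F ^^ j) v = snd F ((snd F ^^ j) u)" by (simp add: funpow_swap1)
      then show ?case using j fr by auto
    next
      assume "(u, v) \<in> ?E\<inverse>"
      then have "u = snd F v" by (auto simp: fds_arcs_def)
      then have "(snd F ^^ Suc j) v = (snd F ^^ j) u" by (simp add: funpow_swap1)
      then show ?case using j by blast
    qed
  qed
  have "\<forall>y\<in>fst F. \<exists>j. (snd F ^^ j) y = r"
    using conn rS reach unfolding fds_connected_def by blast
  then have "rlin F r" unfolding rlin_def using isF rS fr lin by blast
  then show ?thesis using cK by blast
qed

definition rt :: "'a fds \<Rightarrow> 'a" where
  "rt A = (SOME r. r \<in> fst A \<and> snd A r = r)"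

lemma rt_eq: "rlin A r \<Longrightarrow> rt A = r"
  unfolding rt_def
  by (rule some_equality) (auto simp: rlin_def intro: rlin_fix_unique)

definition ee :: "nat \<Rightarrow> 'a fds \<Rightarrow> 'a \<Rightarrow> nat" where
  "ee J A x = card {j\<in>{1..J}. (snd A ^^ j) x = rt A}"

definition aval :: "nat \<Rightarrow> nat \<Rightarrow> 'a fds \<Rightarrow> nat" where
  "aval B J A = (\<Sum>y\<in>{y\<in>fst A. snd A y \<noteq> rt A}. B ^ ee J A y)"

definition cnt :: "nat \<Rightarrow> 'a fds \<Rightarrow> nat \<Rightarrow> nat" where
  "cnt J A v = card {y\<in>{y\<in>fst A. snd A y \<noteq> rt A}. ee J A y = v}"

lemma pc_root:
  assumes "rlin F r" "card (predecessors F r - {r}) = K"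
  shows "pc F r = K + 1"
proof -
  have fin: "finite (fst F)" and rS: "r \<in> fst F" and fr: "snd F r = r"
    using assms by (auto simp: rlin_def is_fds_def)
  have "predecessors F r = insert r (predecessors F r - {r})"
    using rS fr by (auto simp: predecessors_def)
  moreover have "finite (predecessors F r - {r})" using fin by (auto simp: predecessors_def)
  ultimately show ?thesis unfolding pc_def using assms(2)
    by (metis card_insert_disjoint Diff_iff insertI1 Suc_eq_plus1)
qed

lemma pc_lin:
  assumes rl: "rlin F r" and cK: "card (predecessors F r - {r}) = K" and u: "u \<in> fst F"
  shows "pc F (snd F u) = (if snd F u = r then K + 1 else 1)"
proof (cases "snd F u = r")
  case True then show ?thesis using pc_root[OF rl cK] by simp
next
  case False
  have fin: "finite (fst F)" and isF: "is_fds F" using rl by (auto simp: rlin_def is_fds_def)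
  have fuS: "snd F u \<in> fst F" using isF u by (auto simp: is_fds_def)
  have "\<forall>s\<in>fst F. s \<noteq> r \<longrightarrow> card (predecessors F s) \<le> 1" using rl unfolding rlin_def by blast
  then have le: "card (predecessors F (snd F u)) \<le> 1" using fuS False by blast
  have "u \<in> predecessors F (snd F u)" using u by (simp add: predecessors_def)
  moreover have "finite (predecessors F (snd F u))" using fin by (auto simp: predecessors_def)
  ultimately have "card (predecessors F (snd F u)) \<noteq> 0" by auto
  then show ?thesis using le False by (simp add: pc_def)
qed

lemma prod_if_one: "finite A \<Longrightarrow> (\<Prod>j\<in>A. if P j then (b::nat) else 1) = b ^ card {j\<in>A. P j}"
  by (simp add: prod.inter_filter[symmetric])

lemma wt_lin:
  assumes rl: "rlin F r" and cK: "card (predecessors F r - {r}) = K" and y: "y \<in> fst F"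
  shows "wt s c J F y = (if snd F y = r then (K + 1) ^ s else 1) *
            ((K + 1) ^ c) ^ card {j\<in>{1..J}. (snd F ^^ j) y = r}"
proof -
  have isF: "is_fds F" using rl by (simp add: rlin_def)
  have "pc F ((snd F ^^ j) y) ^ c = (if (snd F ^^ j) y = r then (K + 1) ^ c else 1)"
    if jJ: "j \<in> {1..J}" for j
  proof -
    obtain i where i: "j = Suc i" using jJ by (cases j) auto
    have "(snd F ^^ j) y = snd F ((snd F ^^ i) y)" using i by simp
    moreover have "(snd F ^^ i) y \<in> fst F" using iter_closed[OF isF y] .
    ultimately show ?thesis using pc_lin[OF rl cK, of "(snd F ^^ i) y"] by simp
  qed
  then have "(\<Prod>j\<in>{1..J}. pc F ((snd F ^^ j) y) ^ c) =
             (\<Prod>j\<in>{1..J}. if (snd F ^^ j) y = r then (K + 1) ^ c else 1)"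
    by (rule prod.cong[OF refl])
  also have "\<dots> = ((K + 1) ^ c) ^ card {j\<in>{1..J}. (snd F ^^ j) y = r}"
    by (rule prod_if_one) simp
  finally show ?thesis unfolding wt_def using pc_lin[OF rl cK y] by simp
qed

lemma Phi_lin:
  assumes rl: "rlin F r" and cK: "card (predecessors F r - {r}) = K"
  shows "Phi s c J F = (K + 1) ^ (s + 1) * ((K + 1) ^ c) ^ J + aval ((K + 1) ^ c) J F"
proof -
  have fin: "finite (fst F)" and fr: "snd F r = r" using rl by (auto simp: rlin_def is_fds_def)
  have rtF: "rt F = r" using rt_eq[OF rl] .
  let ?B = "(K + 1) ^ c"
  let ?P = "{y\<in>fst F. snd F y = r}" and ?Q = "{y\<in>fst F. snd F y \<noteq> r}"
  have split: "fst F = ?P \<union> ?Q" by auto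
  have "Phi s c J F = (\<Sum>y\<in>?P. wt s c J F y) + (\<Sum>y\<in>?Q. wt s c J F y)"
    unfolding Phi_def by (subst split, rule sum.union_disjoint) (use fin in auto)
  moreover have "(\<Sum>y\<in>?P. wt s c J F y) = (K + 1) ^ (s + 1) * ?B ^ J"
  proof -
    have "wt s c J F y = (K + 1) ^ s * ?B ^ J" if y: "y \<in> ?P" for y
    proof -
      have "(snd F ^^ j) y = r" if jJ: "j \<in> {1..J}" for j
      proof -
        obtain i where i: "j = Suc i" using jJ by (cases j) auto
        have fy: "snd F y = r" using y by simp
        have "(snd F ^^ j) y = (snd F ^^ i) (snd F y)" by (simp only: i funpow_Suc_right o_apply)
        also have "\<dots> = r" unfolding fy by (rule fix_iter[of "snd F" r, OF fr])
        finally show ?thesis .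
      qed
      then have "{j\<in>{1..J}. (snd F ^^ j) y = r} = {1..J}" by blast
      then show ?thesis using wt_lin[OF rl cK, of y s c J] y by simp
    qed
    then have "(\<Sum>y\<in>?P. wt s c J F y) = (\<Sum>y\<in>?P. (K + 1) ^ s * ?B ^ J)" by (rule sum.cong[OF refl])
    also have "\<dots> = card ?P * ((K + 1) ^ s * ?B ^ J)" by simp
    also have "card ?P = K + 1" using pc_root[OF rl cK] by (simp add: pc_def predecessors_def)
    finally have "(\<Sum>y\<in>?P. wt s c J F y) = (K + 1) * ((K + 1) ^ s * ?B ^ J)" .
    then show ?thesis by (simp only: power_add power_one_right mult_ac)
  qed
  moreover have "(\<Sum>y\<in>?Q. wt s c J F y) = aval ?B J F"
    unfolding aval_def ee_def rtF
    by (rule sum.cong) (auto simp: wt_lin[OF rl cK])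
  ultimately show ?thesis by simp
qed

lemma digits:
  fixes c d :: "nat \<Rightarrow> nat"
  shows "(\<forall>v\<le>J. c v < B) \<Longrightarrow> (\<forall>v\<le>J. d v < B) \<Longrightarrow>
    (\<Sum>v\<le>J. c v * B ^ v) = (\<Sum>v\<le>J. d v * B ^ v) \<Longrightarrow> v \<le> J \<Longrightarrow> c v = d v"
proof (induction J arbitrary: c d v)
  case 0 then show ?case by simp
next
  case (Suc J)
  have c0: "c 0 < B" and d0: "d 0 < B" using Suc.prems by auto
  have eqn: "c 0 + B * (\<Sum>i\<le>J. c (Suc i) * B ^ i) = d 0 + B * (\<Sum>i\<le>J. d (Suc i) * B ^ i)"
    using Suc.prems(3) unfolding sum.atMost_Suc_shift
    by (simp add: sum_distrib_left mult.assoc mult.left_commute)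
  have "(c 0 + B * (\<Sum>i\<le>J. c (Suc i) * B ^ i)) mod B = c 0" using c0 by simp
  moreover have "(d 0 + B * (\<Sum>i\<le>J. d (Suc i) * B ^ i)) mod B = d 0" using d0 by simp
  ultimately have e0: "c 0 = d 0" using eqn by simp
  have "(\<Sum>i\<le>J. c (Suc i) * B ^ i) = (\<Sum>i\<le>J. d (Suc i) * B ^ i)"
    using eqn e0 c0 by simp
  then have IH: "c (Suc i) = d (Suc i)" if "i \<le> J" for i
    using Suc.IH[of "\<lambda>i. c (Suc i)" "\<lambda>i. d (Suc i)" i] Suc.prems that by simp
  show ?case
  proof (cases v)
    case 0 then show ?thesis using e0 by simp
  next
    case (Suc i) then show ?thesis using IH Suc.prems(4) by simp
  qed
qed

lemma ee_le:
  "ee J A y \<le> J"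
proof -
  have "ee J A y \<le> card {1..J}" unfolding ee_def by (rule card_mono) auto
  then show ?thesis by simp
qed

lemma aval_cnt:
  assumes "finite (fst A)"
  shows "aval B J A = (\<Sum>v\<le>J. cnt J A v * B ^ v)"
proof -
  let ?Q = "{y\<in>fst A. snd A y \<noteq> rt A}"
  have "aval B J A = (\<Sum>v\<in>{..J}. \<Sum>y\<in>{y\<in>?Q. ee J A y = v}. B ^ ee J A y)"
    unfolding aval_def
    by (rule sum.group[symmetric]) (use assms in \<open>auto simp: ee_le\<close>)
  also have "\<dots> = (\<Sum>v\<le>J. cnt J A v * B ^ v)"
    unfolding cnt_def by (rule sum.cong) auto
  finally show ?thesis .
qed

lemma card_filter_cnt:
  assumes "finite (fst A)"
  shows "card {y\<in>{y\<in>fst A. snd A y \<noteq> rt A}. Q (ee J A y)} = (\<Sum>v\<le>J. if Q v then cnt J A v else 0)"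
proof -
  let ?Q = "{y\<in>fst A. snd A y \<noteq> rt A}"
  have "card {y\<in>?Q. Q (ee J A y)} = (\<Sum>y\<in>?Q. if Q (ee J A y) then 1 else 0)"
    using assms by (simp add: sum.inter_filter[symmetric])
  also have "\<dots> = (\<Sum>v\<in>{..J}. \<Sum>y\<in>{y\<in>?Q. ee J A y = v}. if Q (ee J A y) then 1 else 0)"
    by (rule sum.group[symmetric]) (use assms in \<open>auto simp: ee_le\<close>)
  also have "\<dots> = (\<Sum>v\<le>J. if Q v then cnt J A v else 0)"
    unfolding cnt_def by (rule sum.cong) auto
  finally show ?thesis .
qed

lemma reach_iff:
  assumes rl: "rlin F r" and JJ: "\<forall>y\<in>fst F. (snd F ^^ J) y = r"
    and y: "y \<in> fst F" and fy: "snd F y \<noteq> r"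
  shows "(snd F ^^ t) y = r \<longleftrightarrow> J < ee J F y + t"
proof -
  let ?f = "snd F"
  have fr: "?f r = r" using rl by (simp add: rlin_def)
  have yJ: "(?f ^^ J) y = r" using JJ y by blast
  define d where "d = (LEAST j. (?f ^^ j) y = r)"
  have dr: "(?f ^^ d) y = r" unfolding d_def by (rule LeastI[of _ J]) (rule yJ)
  have dJ: "d \<le> J" unfolding d_def by (rule Least_le) (rule yJ)
  have iff: "(?f ^^ j) y = r \<longleftrightarrow> d \<le> j" for j
  proof
    assume "(?f ^^ j) y = r" then show "d \<le> j" unfolding d_def by (rule Least_le)
  next
    assume "d \<le> j" then show "(?f ^^ j) y = r" by (rule reach_mono[OF fr dr])
  qed
  have d1: "1 \<le> d"
  proof (rule ccontr)
    assume "\<not> 1 \<le> d"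
    then have "d = 0" by simp
    then have "y = r" using dr by simp
    then show False using fy fr by simp
  qed
  have "{j\<in>{1..J}. (?f ^^ j) y = r} = {d..J}" using d1 by (auto simp only: iff atLeastAtMost_iff mem_Collect_eq)
  then have "ee J F y = Suc J - d" unfolding ee_def rt_eq[OF rl] by simp
  then show ?thesis using iff[of t] dJ by auto
qed

lemma Nd_formula:
  assumes rl: "rlin F r" and cK: "card (predecessors F r - {r}) = K"
    and JJ: "\<forall>y\<in>fst F. (snd F ^^ J) y = r" and t: "1 \<le> t"
  shows "Nd F r t = K + 1 + card {y\<in>{y\<in>fst F. snd F y \<noteq> rt F}. J < ee J F y + t}"
proof -
  let ?f = "snd F"
  have fin: "finite (fst F)" and fr: "?f r = r" using rl by (auto simp: rlin_def is_fds_def)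
  have rtF: "rt F = r" using rt_eq[OF rl] .
  let ?P = "{y\<in>fst F. ?f y = r}" and ?Q = "{y\<in>{y\<in>fst F. ?f y \<noteq> r}. J < ee J F y + t}"
  have "{y\<in>fst F. (?f ^^ t) y = r} = ?P \<union> ?Q"
  proof (rule set_eqI)
    fix y
    show "y \<in> {y\<in>fst F. (?f ^^ t) y = r} \<longleftrightarrow> y \<in> ?P \<union> ?Q"
    proof (cases "y \<in> fst F \<and> ?f y = r")
      case True
      obtain i where i: "t = Suc i" using t by (cases t) auto
      have fy: "?f y = r" using True by simp
      have "(?f ^^ t) y = (?f ^^ i) (?f y)" by (simp only: i funpow_Suc_right o_apply)
      also have "\<dots> = r" unfolding fy by (rule fix_iter[of "snd F" r, OF fr])
      finally have "(?f ^^ t) y = r" .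
      then show ?thesis using True by simp
    next
      case False
      then show ?thesis using reach_iff[OF rl JJ, of y t] by auto
    qed
  qed
  moreover have "card (?P \<union> ?Q) = card ?P + card ?Q"
    by (rule card_Un_disjoint) (use fin in auto)
  moreover have "card ?P = K + 1" using pc_root[OF rl cK] by (simp add: pc_def predecessors_def)
  ultimately show ?thesis unfolding Nd_def rtF by simp
qed

lemma Nd_zero:
  assumes "rlin F r" shows "Nd F r 0 = 1"
proof -
  have "{y\<in>fst F. (snd F ^^ 0) y = r} = {r}" using assms by (auto simp: rlin_def)
  then show ?thesis unfolding Nd_def by simp
qed

lemma aval_iso:
  fixes F :: "'a fds" and G :: "'b fds"
  assumes rF: "rlin F r" and cF: "card (predecessors F r - {r}) = K"
    and rG: "rlin G r'" and cG: "card (predecessors G r' - {r'}) = K"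
    and JF: "\<forall>y\<in>fst F. (snd F ^^ J) y = r" and JG: "\<forall>y\<in>fst G. (snd G ^^ J) y = r'"
    and bF: "card (fst F) < B" and bG: "card (fst G) < B"
    and eq: "aval B J F = aval B J G"
  shows "fds_iso F G"
proof -
  have finF: "finite (fst F)" and finG: "finite (fst G)"
    using rF rG by (auto simp: rlin_def is_fds_def)
  have cntF: "cnt J F v < B" for v
  proof -
    have "cnt J F v \<le> card (fst F)" unfolding cnt_def by (rule card_mono[OF finF]) auto
    then show ?thesis using bF by simp
  qed
  have cntG: "cnt J G v < B" for v
  proof -
    have "cnt J G v \<le> card (fst G)" unfolding cnt_def by (rule card_mono[OF finG]) auto
    then show ?thesis using bG by simp
  qed
  have ceq: "cnt J F v = cnt J G v" if "v \<le> J" for v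
    using digits[of J "cnt J F" B "cnt J G" v] cntF cntG eq aval_cnt[OF finF] aval_cnt[OF finG] that
    by simp
  have "Nd F r t = Nd G r' t" for t
  proof (cases "t = 0")
    case True then show ?thesis using Nd_zero[OF rF] Nd_zero[OF rG] by simp
  next
    case False
    then have t: "1 \<le> t" by simp
    have "(\<Sum>v\<le>J. if J < v + t then cnt J F v else 0) = (\<Sum>v\<le>J. if J < v + t then cnt J G v else 0)"
      by (rule sum.cong) (auto simp: ceq)
    then show ?thesis
      using Nd_formula[OF rF cF JF t] Nd_formula[OF rG cG JG t]
        card_filter_cnt[OF finF, of "\<lambda>v. J < v + t" J] card_filter_cnt[OF finG, of "\<lambda>v. J < v + t" J]
      by simp
  qed
  then show ?thesis using rlin_iso[OF rF rG] by blast
qed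




definition PP :: "nat multiset \<Rightarrow> int poly" where
  "PP M = (\<Prod>v\<in>#M. [:int v, 1:])"

lemma poly_PP: "poly (PP M) x = (\<Prod>v\<in>#M. int v + x)"
  unfolding PP_def by (simp add: poly_prod_mset)

lemma poly_PP_nat: "poly (PP M) (int n) = int (\<Prod>v\<in>#M. n + v)"
  by (induction M) (auto simp: poly_PP)

lemma PP_add: "PP (add_mset a M) = [:int a, 1:] * PP M"
  unfolding PP_def by simp

lemma PP_inj: "PP A = PP B \<Longrightarrow> A = B"
proof (induction A arbitrary: B)
  case empty
  show ?case
  proof (rule ccontr)
    assume "{#} \<noteq> B"
    then obtain b where b: "b \<in># B" by (metis multiset_nonemptyE)
    have "poly (PP B) (- int b) = 0" unfolding poly_PP using b by (auto simp: prod_mset_zero_iff)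
    moreover have "poly (PP {#}) (- int b) = 1" by (simp add: PP_def)
    ultimately show False using empty by simp
  qed
next
  case (add a A)
  have "poly (PP (add_mset a A)) (- int a) = 0" by (simp add: PP_add)
  then have "poly (PP B) (- int a) = 0" using add.prems by simp
  then obtain b where b: "b \<in># B" "int b + - int a = 0" unfolding poly_PP
    by (auto simp: prod_mset_zero_iff)
  then have aB: "a \<in># B" by simp
  then have Beq: "add_mset a (B - {#a#}) = B" by simp
  have "[:int a, 1:] * PP A = PP (add_mset a A)" by (simp add: PP_add)
  also have "\<dots> = PP B" using add.prems .
  also have "\<dots> = PP (add_mset a (B - {#a#}))" using Beq by simp
  also have "\<dots> = [:int a, 1:] * PP (B - {#a#})" by (rule PP_add)
  finally have "[:int a, 1:] * PP A = [:int a, 1:] * PP (B - {#a#})" .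
  moreover have nz: "[:int a, 1:] \<noteq> 0" by simp
  ultimately have "PP A = PP (B - {#a#})" using mult_left_cancel[OF nz] by blast
  then have "A = B - {#a#}" by (rule add.IH)
  then show ?case using Beq by simp
qed

lemma mset_prod_eq:
  fixes A B :: "nat multiset" and X :: "nat \<Rightarrow> nat"
  assumes inj: "inj X" and eq: "\<forall>s. (\<Prod>v\<in>#A. X s + v) = (\<Prod>v\<in>#B. X s + v)"
  shows "A = B"
proof -
  have "PP A = PP B"
  proof (rule ccontr)
    assume ne: "PP A \<noteq> PP B"
    then have "PP A - PP B \<noteq> 0" by simp
    then have fin: "finite {x. poly (PP A - PP B) x = 0}" by (rule poly_roots_finite)
    have "range (\<lambda>s. int (X s)) \<subseteq> {x. poly (PP A - PP B) x = 0}"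
      using eq by (auto simp: poly_PP_nat)
    moreover have "infinite (range (\<lambda>s. int (X s)))"
      by (rule range_inj_infinite) (use inj in \<open>auto simp: inj_def\<close>)
    ultimately show False using fin finite_subset by blast
  qed
  then show ?thesis by (rule PP_inj)
qed

lemma prod_list_mset: "prod_list (map (\<lambda>F. g (a F)) L) = (\<Prod>v\<in>#mset (map a L). g v)"
  by (induction L) auto

lemma common_J:
  "\<forall>F\<in>set L. rlin F (rt F) \<Longrightarrow> \<exists>J. \<forall>J'\<ge>J. \<forall>F\<in>set L. \<forall>y\<in>fst F. (snd F ^^ J') y = rt F"
proof (induction L)
  case Nil then show ?case by simp
next
  case (Cons F L)
  have "\<forall>F\<in>set L. rlin F (rt F)" using Cons.prems by simp
  then obtain J where J: "\<forall>J'\<ge>J. \<forall>F\<in>set L. \<forall>y\<in>fst F. (snd F ^^ J') y = rt F"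
    using Cons.IH by blast
  have "rlin F (rt F)" using Cons.prems by simp
  then obtain T where T: "\<forall>t\<ge>T. \<forall>y\<in>fst F. (snd F ^^ t) y = rt F" by (rule rlin_T[THEN exE])
  have "\<forall>J'\<ge>J + T. \<forall>G\<in>set (F # L). \<forall>y\<in>fst G. (snd G ^^ J') y = rt G"
  proof (intro allI impI ballI)
    fix J' G y assume J': "J + T \<le> J'" and G: "G \<in> set (F # L)" and y: "y \<in> fst G"
    show "(snd G ^^ J') y = rt G"
    proof (cases "G = F")
      case True then show ?thesis using T J' y by simp
    next
      case False then have "G \<in> set L" using G by simp
      then show ?thesis using J J' y by simp
    qed
  qed
  then show ?case by blast
qed

lemma common_c: "\<exists>c. \<forall>F\<in>set L. card (fst F) < (c::nat)"
proof (induction L)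
  case Nil then show ?case by simp
next
  case (Cons F L)
  then obtain c where "\<forall>F\<in>set L. card (fst F) < c" by blast
  then have "\<forall>G\<in>set (F # L). card (fst G) < c + Suc (card (fst F))" by auto
  then show ?case by blast
qed

theorem mainTheorem5:
  fixes K :: nat and Fs :: "'a fds list" and Gs :: "'b fds list"
  assumes "K \<ge> 1"
    and "\<forall>F\<in>set Fs. linear_dendron K F"
    and "\<forall>G\<in>set Gs. linear_dendron K G"
    and "fds_iso (fds_prod Fs) (fds_prod Gs)"
  shows "length Fs = length Gs \<and>
    (\<exists>\<sigma>. bij_betw \<sigma> {..<length Fs} {..<length Gs} \<and>
        (\<forall>i<length Fs. fds_iso (Fs ! i) (Gs ! \<sigma> i)))"
proof -
  have infoF: "rlin F (rt F) \<and> card (predecessors F (rt F) - {rt F}) = K" if FF: "F \<in> set Fs" for F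
  proof -
    obtain r where "rlin F r" "card (predecessors F r - {r}) = K" using ld_rlin[of K F] assms(2) FF by blast
    then show ?thesis using rt_eq[of F r] by simp
  qed
  have infoG: "rlin G (rt G) \<and> card (predecessors G (rt G) - {rt G}) = K" if GG: "G \<in> set Gs" for G
  proof -
    obtain r where "rlin G r" "card (predecessors G r - {r}) = K" using ld_rlin[of K G] assms(3) GG by blast
    then show ?thesis using rt_eq[of G r] by simp
  qed
  obtain J1 where J1: "\<forall>J'\<ge>J1. \<forall>F\<in>set Fs. \<forall>y\<in>fst F. (snd F ^^ J') y = rt F"
    using common_J[of Fs] infoF by blast
  obtain J2 where J2: "\<forall>J'\<ge>J2. \<forall>F\<in>set Gs. \<forall>y\<in>fst F. (snd F ^^ J') y = rt F"
    using common_J[of Gs] infoG by blast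
  define J where "J = J1 + J2"
  have JF: "\<forall>F\<in>set Fs. \<forall>y\<in>fst F. (snd F ^^ J) y = rt F" using J1 unfolding J_def by simp
  have JG: "\<forall>F\<in>set Gs. \<forall>y\<in>fst F. (snd F ^^ J) y = rt F" using J2 unfolding J_def by simp
  obtain c1 where c1: "\<forall>F\<in>set Fs. card (fst F) < c1" using common_c by blast
  obtain c2 where c2: "\<forall>F\<in>set Gs. card (fst F) < c2" using common_c by blast
  define c where "c = c1 + c2"
  define B where "B = (K + 1) ^ c"
  have cB: "c < B"
  proof -
    have "c < 2 ^ c" by (rule less_exp)
    also have "(2::nat) ^ c \<le> (K + 1) ^ c" using assms(1) by (intro power_mono) auto
    finally show ?thesis unfolding B_def .
  qed
  have BF: "\<forall>F\<in>set Fs. card (fst F) < B" using c1 cB unfolding c_def by fastforce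
  have BG: "\<forall>F\<in>set Gs. card (fst F) < B" using c2 cB unfolding c_def by fastforce
  define X where "X s = (K + 1) ^ (s + 1) * B ^ J" for s
  have isF: "is_fds (fds_prod Fs)" using infoF by (intro is_fds_prod) (auto simp: rlin_def)
  have eqs: "(\<Prod>v\<in>#mset (map (aval B J) Fs). X s + v) = (\<Prod>v\<in>#mset (map (aval B J) Gs). X s + v)" for s
  proof -
    have "Phi s c J (fds_prod Fs) = Phi s c J (fds_prod Gs)" by (rule Phi_iso[OF isF assms(4)])
    moreover have "Phi s c J (fds_prod Fs) = prod_list (map (\<lambda>F. X s + aval B J F) Fs)"
    proof -
      have PF: "Phi s c J F = X s + aval B J F" if FF: "F \<in> set Fs" for F
        using Phi_lin[of F "rt F" K s c J] infoF[OF FF] unfolding X_def B_def by simp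
      have "map (Phi s c J) Fs = map (\<lambda>F. X s + aval B J F) Fs"
        by (rule map_cong[OF refl]) (rule PF)
      then show ?thesis unfolding Phi_prod by (rule arg_cong)
    qed
    moreover have "Phi s c J (fds_prod Gs) = prod_list (map (\<lambda>F. X s + aval B J F) Gs)"
    proof -
      have PF: "Phi s c J F = X s + aval B J F" if FF: "F \<in> set Gs" for F
        using Phi_lin[of F "rt F" K s c J] infoG[OF FF] unfolding X_def B_def by simp
      have "map (Phi s c J) Gs = map (\<lambda>F. X s + aval B J F) Gs"
        by (rule map_cong[OF refl]) (rule PF)
      then show ?thesis unfolding Phi_prod by (rule arg_cong)
    qed
    ultimately show ?thesis by (simp add: prod_list_mset[of "\<lambda>v. X s + v"])
  qed
  have injX: "inj X"
  proof (rule injI)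
    fix s s' assume "X s = X s'"
    moreover have "B ^ J \<noteq> 0" unfolding B_def by simp
    ultimately have "(K + 1) ^ (s + 1) = (K + 1) ^ (s' + 1)" unfolding X_def
      using mult_right_cancel[of "B ^ J"] by blast
    moreover have "1 < K + 1" using assms(1) by simp
    ultimately show "s = s'" using power_inject_exp[of "K + 1" "s + 1" "s' + 1"] by simp
  qed
  have ms: "mset (map (aval B J) Fs) = mset (map (aval B J) Gs)"
    by (rule mset_prod_eq[OF injX]) (use eqs in blast)
  have len: "length Fs = length Gs" using mset_eq_length[OF ms] by simp
  obtain \<sigma> where sb: "bij_betw \<sigma> {..<length Fs} {..<length Gs}"
    and se: "\<forall>i<length Fs. aval B J (Fs ! i) = aval B J (Gs ! \<sigma> i)"
  proof -
    obtain f where fb: "bij_betw f {..<length (map (aval B J) Fs)} {..<length (map (aval B J) Gs)}"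
      and fe: "\<forall>i<length (map (aval B J) Fs). map (aval B J) Fs ! i = map (aval B J) Gs ! (f i)"
      using permutation_Ex_bij[OF ms] by blast
    have fb': "bij_betw f {..<length Fs} {..<length Gs}" using fb by simp
    have "\<forall>i<length Fs. aval B J (Fs ! i) = aval B J (Gs ! f i)"
    proof (intro allI impI)
      fix i assume i: "i < length Fs"
      then have "f i < length Gs" using fb' by (auto simp: bij_betw_def)
      then show "aval B J (Fs ! i) = aval B J (Gs ! f i)" using fe i by simp
    qed
    then show ?thesis using that fb' by blast
  qed
  have "fds_iso (Fs ! i) (Gs ! \<sigma> i)" if i: "i < length Fs" for i
  proof -
    have si: "\<sigma> i < length Gs" using sb i by (auto simp: bij_betw_def)
    have Fi: "Fs ! i \<in> set Fs" using i by simp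
    have Gi: "Gs ! \<sigma> i \<in> set Gs" using si by simp
    show ?thesis
      by (rule aval_iso[of _ _ K _ _ J B]) (use infoF[OF Fi] infoG[OF Gi] JF Fi JG Gi BF BG se i in auto)
  qed
  then show ?thesis using len sb by blast
qed


end
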